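(* Let $G=(V,E)$ be a connected graph on $n$ vertices with $\delta(G)\geq 3$ and vertex connectivity $\kappa(G)=1$ (that is, $G$ has a cut vertex). Then $F(G)\geq \lfloor (n+1)/2\rfloor$.
   Context: All graphs are finite and simple. A vertex cut of a connected graph is a set of vertices whose removal leaves a disconnected or trivial graph; $\kappa(G)$ is the minimum size of a vertex cut. Given a graph $G=(V,E)$ and a set $S\subseteq V$ of filled vertices, the color change rule is: if a filled vertex $v$ has exactly one unfilled neighbor $w$, then $w$ becomes filled. The derived set of $S$ is the set of filled vertices obtained after applying the rule until no further application is possible. $S$ is a zero forcing set if its derived set is $V$; otherwise $S$ is a failed zero forcing set. The failed zero forcing number $F(G)$ is the maximum size of a failed zero forcing set of $G$. *)

theory Defs
  imports Main
begin

definition simple_graph :: "'a set \<Rightarrow> ('a \<Rightarrow> 'a \<Rightarrow> bool) \<Rightarrow> bool" where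
  "simple_graph V E \<longleftrightarrow> finite V \<and> (\<forall>x y. E x y \<longrightarrow> x \<in> V \<and> y \<in> V)
     \<and> (\<forall>x y. E x y \<longrightarrow> E y x) \<and> (\<forall>x. \<not> E x x)"

definition nbrs :: "'a set \<Rightarrow> ('a \<Rightarrow> 'a \<Rightarrow> bool) \<Rightarrow> 'a \<Rightarrow> 'a set" where
  "nbrs V E v = {w \<in> V. E v w}"

definition min_degree_ge :: "'a set \<Rightarrow> ('a \<Rightarrow> 'a \<Rightarrow> bool) \<Rightarrow> nat \<Rightarrow> bool" where
  "min_degree_ge V E d \<longleftrightarrow> (\<forall>v\<in>V. d \<le> card (nbrs V E v))"

definition connected_on :: "'a set \<Rightarrow> ('a \<Rightarrow> 'a \<Rightarrow> bool) \<Rightarrow> bool" where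
  "connected_on U E \<longleftrightarrow> U \<noteq> {} \<and>
     (\<forall>x\<in>U. \<forall>y\<in>U. (x, y) \<in> {(a, b). a \<in> U \<and> b \<in> U \<and> E a b}\<^sup>*)"

definition vertex_cut :: "'a set \<Rightarrow> ('a \<Rightarrow> 'a \<Rightarrow> bool) \<Rightarrow> 'a set \<Rightarrow> bool" where
  "vertex_cut V E X \<longleftrightarrow> X \<subseteq> V \<and> (\<not> connected_on (V - X) E \<or> card (V - X) \<le> 1)"

definition vertex_connectivity :: "'a set \<Rightarrow> ('a \<Rightarrow> 'a \<Rightarrow> bool) \<Rightarrow> nat" where
  "vertex_connectivity V E = Min {card X | X. vertex_cut V E X}"

definition force_step :: "'a set \<Rightarrow> ('a \<Rightarrow> 'a \<Rightarrow> bool) \<Rightarrow> ('a set \<times> 'a set) set" where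
  "force_step V E = {(T, insert w T) | T w. \<exists>v\<in>T. nbrs V E v - T = {w}}"

text \<open>S is a zero forcing set iff repeated application of the color change rule
fills all of V (the derived set is unique, so this is the derived set being V).\<close>
definition zero_forcing_set :: "'a set \<Rightarrow> ('a \<Rightarrow> 'a \<Rightarrow> bool) \<Rightarrow> 'a set \<Rightarrow> bool" where
  "zero_forcing_set V E S \<longleftrightarrow> (S, V) \<in> (force_step V E)\<^sup>*"

definition failed_zero_forcing_set :: "'a set \<Rightarrow> ('a \<Rightarrow> 'a \<Rightarrow> bool) \<Rightarrow> 'a set \<Rightarrow> bool" where
  "failed_zero_forcing_set V E S \<longleftrightarrow> S \<subseteq> V \<and> \<not> zero_forcing_set V E S"

definition failed_zf_number :: "'a set \<Rightarrow> ('a \<Rightarrow> 'a \<Rightarrow> bool) \<Rightarrow> nat" where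
  "failed_zf_number V E = Max {card S | S. failed_zero_forcing_set V E S}"

end

theory Submission
  imports Defs
begin

lemma fort_failed:
  assumes UV: "U \<subseteq> V" and Une: "U \<noteq> {}"
    and fort: "\<And>u. u \<notin> U \<Longrightarrow> card (nbrs V E u \<inter> U) \<noteq> 1"
  shows "failed_zero_forcing_set V E (V - U)"
proof -
  have inv: "T \<inter> U = {}" if "(V - U, T) \<in> (force_step V E)\<^sup>*" for T
    using that
  proof (induction rule: rtrancl_induct)
    case base show ?case by blast
  next
    case (step T T')
    then obtain w v' where T': "T' = insert w T" and v': "v' \<in> T"
        and nw: "nbrs V E v' - T = {w}"
      unfolding force_step_def by blast
    have "v' \<notin> U" using v' step.IH by blast
    have "w \<notin> U"
    proof
      assume "w \<in> U"
      have "nbrs V E v' \<inter> U = {w}" using nw \<open>w\<in>U\<close> step.IH by blast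
      then show False using fort[OF \<open>v'\<notin>U\<close>] by simp
    qed
    then show ?case using T' step.IH by blast
  qed
  show ?thesis unfolding failed_zero_forcing_set_def zero_forcing_set_def
    using inv[of V] UV Une by blast
qed

lemma fort_exists:
  assumes sg: "simple_graph V E" and md: "min_degree_ge V E 3" and vV: "v \<in> V"
    and CV: "C \<subseteq> V - {v}" and Cne: "C \<noteq> {}"
    and closed: "\<And>a b. a \<in> C \<Longrightarrow> E a b \<Longrightarrow> b \<in> C \<or> b = v"
  shows "\<exists>U. U \<subseteq> C \<and> U \<noteq> {} \<and> (\<forall>u. u \<notin> U \<longrightarrow> card (nbrs V E u \<inter> U) \<noteq> 1)"
proof -
  have sym: "E a b \<Longrightarrow> E b a" for a b using sg unfolding simple_graph_def by blast
  have irr: "\<not> E a a" for a using sg unfolding simple_graph_def by blast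
  have fin: "finite V" using sg unfolding simple_graph_def by blast
  have out: "nbrs V E u \<inter> C = {}" if "u \<notin> C" "u \<noteq> v" for u
    using closed sym that unfolding nbrs_def by blast
  show ?thesis
  proof (cases "card (nbrs V E v \<inter> C) = 1")
    case False
    have "\<forall>u. u \<notin> C \<longrightarrow> card (nbrs V E u \<inter> C) \<noteq> 1"
    proof (intro allI impI)
      fix u assume "u \<notin> C"
      show "card (nbrs V E u \<inter> C) \<noteq> 1"
      proof (cases "u = v")
        case True then show ?thesis using False by simp
      next
        case False then show ?thesis using out[OF \<open>u\<notin>C\<close> False] by simp
      qed
    qed
    then show ?thesis by (intro exI[of _ C] conjI) (use Cne in auto)
  next
    case True
    then obtain w where w: "nbrs V E v \<inter> C = {w}" by (auto simp: card_1_singleton_iff)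
    have wC: "w \<in> C" using w by blast
    have nw: "nbrs V E w \<subseteq> C \<union> {v}" using closed[OF wC] unfolding nbrs_def by blast
    have dw: "3 \<le> card (nbrs V E w)" using md wC CV unfolding min_degree_ge_def by blast
    let ?U = "C - {w}"
    have key: "nbrs V E w \<inter> ?U = nbrs V E w - {v}" using nw irr CV unfolding nbrs_def by blast
    have finn: "finite (nbrs V E w)" using fin unfolding nbrs_def by simp
    have c2: "card (nbrs V E w - {v}) \<ge> 2" using dw finn
      by (auto simp: card_Diff_singleton_if)
    have Une: "?U \<noteq> {}"
    proof
      assume "?U = {}"
      then have "nbrs V E w - {v} = {}" using key by blast
      then have "card (nbrs V E w - {v}) = 0" by (simp only: card.empty)
      then show False using c2 by linarith
    qed
    have "\<forall>u. u \<notin> ?U \<longrightarrow> card (nbrs V E u \<inter> ?U) \<noteq> 1"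
    proof (intro allI impI)
      fix u assume u: "u \<notin> ?U"
      show "card (nbrs V E u \<inter> ?U) \<noteq> 1"
      proof (cases "u = w")
        case True
        have "card (nbrs V E u \<inter> ?U) \<ge> 2" unfolding True key using c2 .
        then show ?thesis by linarith
      next
        case False
        show ?thesis
        proof (cases "u = v")
          case True
          then have "nbrs V E u \<inter> ?U = {}" using w by blast
          then show ?thesis by simp
        next
          case False2: False
          have "u \<notin> C" using u False by blast
          then have "nbrs V E u \<inter> ?U = {}" using out[OF _ False2] by blast
          then show ?thesis by simp
        qed
      qed
    qed
    then show ?thesis by (intro exI[of _ "C - {w}"] conjI) (use Une in auto)
  qed
qed

theorem lemma4:
  fixes V :: "'a set" and E :: "'a \<Rightarrow> 'a \<Rightarrow> bool"
  assumes "simple_graph V E"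
    and "connected_on V E"
    and "min_degree_ge V E 3"
    and "vertex_connectivity V E = 1"
  shows "failed_zf_number V E \<ge> (card V + 1) div 2"
proof -
  note sg = assms(1) and md = assms(3)
  have sym: "E a b \<Longrightarrow> E b a" for a b using sg unfolding simple_graph_def by blast
  have inV: "E a b \<Longrightarrow> a \<in> V \<and> b \<in> V" for a b using sg unfolding simple_graph_def by blast
  have fin: "finite V" using sg unfolding simple_graph_def by blast
  let ?K = "{card X | X. vertex_cut V E X}"
  have "V \<in> {X. vertex_cut V E X}" unfolding vertex_cut_def by simp
  then have Kne: "?K \<noteq> {}" by blast
  have "?K \<subseteq> {..card V}" unfolding vertex_cut_def using fin card_mono by fastforce
  then have Kfin: "finite ?K" using finite_subset by blast
  have "1 \<in> ?K" using Min_in[OF Kfin Kne] assms(4) unfolding vertex_connectivity_def by simp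
  then obtain X where X1: "card X = 1" and cut: "vertex_cut V E X" by (smt (verit) mem_Collect_eq)
  then obtain v where Xv: "X = {v}" by (auto simp: card_1_singleton_iff)
  have vV: "v \<in> V" using cut Xv unfolding vertex_cut_def by blast
  define W where "W = V - {v}"
  have finW: "finite W" using fin W_def by simp
  have d3: "3 \<le> card (nbrs V E v)" using md vV unfolding min_degree_ge_def by blast
  have "nbrs V E v \<subseteq> W" using sg unfolding nbrs_def W_def simple_graph_def by blast
  then have cW: "card W \<ge> 3" using d3 card_mono[OF finW] le_trans by blast
  have cVW: "card W = card V - 1" using W_def vV fin by simp
  have nc: "\<not> connected_on W E" using cut Xv cW unfolding vertex_cut_def W_def by auto
  define R where "R = {(a, b). a \<in> W \<and> b \<in> W \<and> E a b}"
  have "W \<noteq> {}" using cW by auto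
  then obtain x y where xW: "x \<in> W" and yW: "y \<in> W" and xy: "(x, y) \<notin> R\<^sup>*"
    using nc unfolding connected_on_def R_def by blast
  define A where "A = {z. (x, z) \<in> R\<^sup>*}"
  have AW: "A \<subseteq> W"
  proof
    fix z assume "z \<in> A"
    then have "(x, z) \<in> R\<^sup>*" unfolding A_def by simp
    then show "z \<in> W"
      by (cases rule: rtranclE) (use xW R_def in auto)
  qed
  define B where "B = W - A"
  have xA: "x \<in> A" unfolding A_def by simp
  have yB: "y \<in> B" unfolding B_def A_def using yW xy by simp
  have clA: "b \<in> A \<or> b = v" if "a \<in> A" "E a b" for a b
  proof (cases "b = v")
    case False
    then have "b \<in> W" using inV[OF that(2)] W_def by blast
    then have "(a, b) \<in> R" using that AW unfolding R_def by blast
    then show ?thesis using that(1) unfolding A_def by (auto intro: rtrancl_into_rtrancl)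
  qed simp
  have clB: "b \<in> B \<or> b = v" if "a \<in> B" "E a b" for a b
  proof (cases "b = v")
    case False
    then have bW: "b \<in> W" using inV[OF that(2)] W_def by blast
    have "b \<notin> A"
    proof
      assume "b \<in> A"
      then have "a \<in> A" using clA[OF _ sym[OF that(2)]] that(1) unfolding B_def W_def by blast
      then show False using that(1) B_def by blast
    qed
    then show ?thesis using bW B_def by blast
  qed simp
  have cAB: "card A + card B = card W"
  proof -
    have fA: "finite A" using finite_subset[OF AW finW] .
    have "card B = card W - card A" unfolding B_def using card_Diff_subset[OF fA AW] .
    moreover have "card A \<le> card W" using card_mono[OF finW AW] .
    ultimately show ?thesis by linarith
  qed
  have "\<exists>C. C \<subseteq> W \<and> C \<noteq> {} \<and> (\<forall>a b. a \<in> C \<longrightarrow> E a b \<longrightarrow> b \<in> C \<or> b = v)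
           \<and> 2 * card C \<le> card V - 1"
  proof (cases "card A \<le> card B")
    case True
    have "2 * card A \<le> card V - 1" using True cAB cVW by linarith
    moreover have "A \<noteq> {}" using xA by blast
    ultimately show ?thesis using AW clA by blast
  next
    case False
    have "2 * card B \<le> card V - 1" using False cAB cVW by linarith
    moreover have "B \<noteq> {}" using yB by blast
    moreover have "B \<subseteq> W" unfolding B_def by blast
    ultimately show ?thesis using clB by blast
  qed
  then obtain C where CW: "C \<subseteq> W" and Cne: "C \<noteq> {}"
    and clC: "\<And>a b. a \<in> C \<Longrightarrow> E a b \<Longrightarrow> b \<in> C \<or> b = v" and cC: "2 * card C \<le> card V - 1"
    by blast
  have CV': "C \<subseteq> V - {v}" using CW W_def by simp
  from fort_exists[OF sg md vV CV' Cne clC] obtain U where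
    Uall: "U \<subseteq> C \<and> U \<noteq> {} \<and> (\<forall>u. u \<notin> U \<longrightarrow> card (nbrs V E u \<inter> U) \<noteq> 1)" ..
  have UC: "U \<subseteq> C" and Une: "U \<noteq> {}"
    and fort: "\<forall>u. u \<notin> U \<longrightarrow> card (nbrs V E u \<inter> U) \<noteq> 1" using Uall by simp_all
  have UV: "U \<subseteq> V" using UC CW W_def by blast
  have failed: "failed_zero_forcing_set V E (V - U)"
    using fort_failed[OF UV Une] fort by simp
  have cU: "card U \<le> card C" using UC finite_subset[OF CW finW] card_mono by blast
  have cS: "card (V - U) = card V - card U" using card_Diff_subset[OF finite_subset[OF UV fin] UV] .
  have "{card S | S. failed_zero_forcing_set V E S} \<subseteq> {..card V}"
  proof
    fix k assume "k \<in> {card S | S. failed_zero_forcing_set V E S}"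
    then obtain S where "k = card S" "S \<subseteq> V" unfolding failed_zero_forcing_set_def by blast
    then show "k \<in> {..card V}" using card_mono[OF fin] by simp
  qed
  then have Ffin: "finite {card S | S. failed_zero_forcing_set V E S}" using finite_subset by blast
  have F: "card (V - U) \<le> failed_zf_number V E"
    unfolding failed_zf_number_def using failed by (intro Max_ge[OF Ffin]) blast
  have "card V \<ge> 1" using vV fin by (metis One_nat_def Suc_leI card_gt_0_iff empty_iff)
  have "card V + 1 \<le> 2 * card (V - U)" using cS cU cC \<open>card V \<ge> 1\<close> by linarith
  then have "(card V + 1) div 2 \<le> (2 * card (V - U)) div 2" by (rule div_le_mono)
  then have "(card V + 1) div 2 \<le> card (V - U)" by simp
  then show ?thesis using F by (rule le_trans)
qed

end
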